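(* Let $\langle I_n:n\in\omega\rangle$ be a sequence of $\sigma$-ideals on a set $X$ with $I_{n+1}\subseteq I_n$ for all $n$, and let $I=\bigcap_n I_n$. Suppose that for each $m\in\omega$ there is a Galois–Tukey morphism from $\mathbf{Cof}(I_m)$ to $\mathbf{Lc}(\omega,2^{\mathrm{id}})$. Then there is a Galois–Tukey morphism from $\mathbf{Cof}(I)$ to $\mathbf{Lc}(\omega,2^{\mathrm{id}})$.
   Context: A relational system is a triple $(A,B,R)$ with $R\subseteq A\times B$. A Galois–Tukey morphism from $(A,B,R)$ to $(A',B',S)$ is a pair $(\varphi,\psi)$ with $\varphi\colon A\to A'$, $\psi\colon B'\to B$ such that for all $x\in A$, $y\in B'$: $\varphi(x)\,S\,y$ implies $x\,R\,\psi(y)$. For an ideal $J$, $\mathbf{Cof}(J)=(J,J,\subseteq)$. $\mathbf{Lc}(\omega,2^{\mathrm{id}})=(\omega^\omega,S,\in^* )$ where $S=\prod_{n\in\omega}[\omega]^{\le 2^n}$ is the set of sequences $\phi$ with $\phi(n)\subseteq\omega$, $|\phi(n)|\le2^n$, and $x\in^*\phi$ iff $x(n)\in\phi(n)$ for all but finitely many $n$. *)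

theory Defs
  imports Main "HOL-Library.Countable_Set"
begin

type_synonym ('a, 'b) relsys = "'a set \<times> 'b set \<times> ('a \<Rightarrow> 'b \<Rightarrow> bool)"

definition GT_morphism_exists :: "('a, 'b) relsys \<Rightarrow> ('c, 'd) relsys \<Rightarrow> bool" where
  "GT_morphism_exists AR AS \<longleftrightarrow>
     (case AR of (A, B, R) \<Rightarrow> case AS of (A', B', S) \<Rightarrow>
       (\<exists>\<phi> \<psi>. (\<forall>x\<in>A. \<phi> x \<in> A') \<and> (\<forall>y\<in>B'. \<psi> y \<in> B) \<and>
          (\<forall>x\<in>A. \<forall>y\<in>B'. S (\<phi> x) y \<longrightarrow> R x (\<psi> y))))"

definition sigma_ideal :: "'x set \<Rightarrow> 'x set set \<Rightarrow> bool" where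
  "sigma_ideal X J \<longleftrightarrow>
     J \<subseteq> Pow X \<and>
     (\<forall>A\<in>J. \<forall>B. B \<subseteq> A \<longrightarrow> B \<in> J) \<and>
     (\<forall>F. countable F \<and> F \<subseteq> J \<longrightarrow> \<Union>F \<in> J) \<and>
     X \<notin> J"

definition Cof :: "'x set set \<Rightarrow> ('x set, 'x set) relsys" where
  "Cof J = (J, J, (\<subseteq>))"

definition slaloms :: "(nat \<Rightarrow> nat set) set" where
  "slaloms = {\<phi>. \<forall>n. finite (\<phi> n) \<and> card (\<phi> n) \<le> 2 ^ n}"

definition in_star :: "(nat \<Rightarrow> nat) \<Rightarrow> (nat \<Rightarrow> nat set) \<Rightarrow> bool" where
  "in_star x \<phi> \<longleftrightarrow> (\<exists>N. \<forall>n\<ge>N. x n \<in> \<phi> n)"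

definition Lc_2id :: "(nat \<Rightarrow> nat, nat \<Rightarrow> nat set) relsys" where
  "Lc_2id = (UNIV, slaloms, in_star)"

end

theory Submission
  imports Defs
begin

theorem theorem4p4:
  fixes X :: "'x set" and Is :: "nat \<Rightarrow> 'x set set"
  assumes "\<And>n. sigma_ideal X (Is n)"
    and "\<And>n. Is (Suc n) \<subseteq> Is n"
    and "\<And>m. GT_morphism_exists (Cof (Is m)) Lc_2id"
  shows "GT_morphism_exists (Cof (\<Inter>n. Is n)) Lc_2id"
proof -
  have "\<forall>m. \<exists>\<phi> \<psi>. (\<forall>y\<in>slaloms. \<psi> y \<in> Is m) \<and>
         (\<forall>x\<in>Is m. \<forall>y\<in>slaloms. in_star (\<phi> x) y \<longrightarrow> x \<subseteq> \<psi> y)"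
    using assms(3) by (auto simp: GT_morphism_exists_def Cof_def Lc_2id_def)
  then obtain \<Phi> \<Psi> where P: "\<And>m. (\<forall>y\<in>slaloms. \<Psi> m y \<in> Is m) \<and>
         (\<forall>x\<in>Is m. \<forall>y\<in>slaloms. in_star (\<Phi> m x) y \<longrightarrow> x \<subseteq> \<Psi> m y)"
    by metis
  have down: "\<And>n A B. A \<in> Is n \<Longrightarrow> B \<subseteq> A \<Longrightarrow> B \<in> Is n"
    using assms(1) unfolding sigma_ideal_def by blast
  define sl :: "nat \<Rightarrow> (nat \<Rightarrow> nat set) \<Rightarrow> nat \<Rightarrow> nat set" where
    "sl m S = (\<lambda>n. (\<lambda>c. (from_nat c :: nat list) ! m) ` S n)" for m S
  define code :: "'x set \<Rightarrow> nat \<Rightarrow> nat" where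
    "code A = (\<lambda>n. to_nat (map (\<lambda>m. \<Phi> m A n) [0..<Suc n]))" for A
  have slS: "sl m S \<in> slaloms" if "S \<in> slaloms" for m S
  proof -
    have "finite (sl m S n) \<and> card (sl m S n) \<le> 2 ^ n" for n
    proof -
      have "finite (S n)" "card (S n) \<le> 2 ^ n" using that by (auto simp: slaloms_def)
      then show ?thesis unfolding sl_def using card_image_le le_trans by blast
    qed
    then show ?thesis by (simp add: slaloms_def)
  qed
  have key: "in_star (\<Phi> m A) (sl m S)" if hst: "in_star (code A) S" for m A S
  proof -
    obtain N where N: "\<And>n. n \<ge> N \<Longrightarrow> code A n \<in> S n" using hst by (auto simp: in_star_def)
    have "\<Phi> m A n \<in> sl m S n" if "n \<ge> max N m" for n
    proof -
      have "(from_nat (code A n) :: nat list) ! m = \<Phi> m A n"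
        using that by (simp add: code_def del: upt_Suc)
      then show ?thesis unfolding sl_def using N[of n] that by force
    qed
    then show ?thesis unfolding in_star_def by blast
  qed
  have c1: "(\<Inter>m. \<Psi> m (sl m S)) \<in> (\<Inter>n. Is n)" if S: "S \<in> slaloms" for S
  proof
    fix n
    have "\<Psi> n (sl n S) \<in> Is n" using P slS[OF S] by blast
    then show "(\<Inter>m. \<Psi> m (sl m S)) \<in> Is n" by (rule down) blast
  qed
  have c2: "A \<subseteq> (\<Inter>m. \<Psi> m (sl m S))"
    if A: "A \<in> (\<Inter>n. Is n)" and S: "S \<in> slaloms" and st: "in_star (code A) S" for A S
  proof (rule INT_greatest)
    fix m
    show "A \<subseteq> \<Psi> m (sl m S)" using P[of m] A slS[OF S] key[OF st] by blast
  qed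
  show ?thesis
    unfolding GT_morphism_exists_def Cof_def Lc_2id_def prod.case
    apply (rule exI[of _ code], rule exI[of _ "\<lambda>S. \<Inter>m. \<Psi> m (sl m S)"])
    apply (intro conjI ballI impI)
      apply simp
     apply (erule c1)
    apply (erule (2) c2)
    done
qed

end
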